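(* Let $L$ be a $c$-lattice and $S$ a multiplicatively closed subset of $L$ (with $1\in S$, $0\notin S$). Let $q$ be an $S$-$p$-primary element of $L$ and let $x\in L$ be such that $sx\not\le q$ for all $s\in S$. Then $(q:sx)$ is an $S$-primary element of $L$ for every $s\in S$, and there exists $t\in S$ such that $t\sqrt{(q:sx)}\le p\le\sqrt{(q:sx)}$ for all $s\in S$. In particular, $(\sqrt{(q:x)})_S=p_S$.
   Context: A multiplicative lattice is a complete lattice with a commutative, associative multiplication distributing over arbitrary joins, with $1$ as identity; $L_*$ is the set of compact elements. A $c$-lattice is a compactly generated multiplicative lattice with $1$ compact in which the product of two compact elements is compact. A multiplicatively closed subset is a nonempty $S\subseteq L_*$ closed under multiplication. $(a:b)=\bigvee\{y\mid yb\le a\}$; $\sqrt a=\bigvee\{y\in L_*\mid y^n\le a\text{ for some }n\in\mathbb{Z}^+\}$; the $S$-saturation is $a_S=\bigvee\{y\in L\mid sy\le a\text{ for some }s\in S\}$. A proper element $p$ with $t\not\le p$ for all $t\in S$ is $S$-prime if there is $s\in S$ such that $ab\le p$ implies $sa\le p$ or $sb\le p$ for all $a,b$. A proper element $q$ with $t\not\le q$ for all $t\in S$ is $S$-primary if there is $s\in S$ such that $cd\le q$ implies $sc\le q$ or $sd\le\sqrt q$ for all $c,d\in L$; it is $S$-$p$-primary if moreover $p=\sqrt q$ is $S$-prime. *)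

theory Defs
  imports Main
begin

definition mult_lattice :: "'a::{complete_lattice, comm_monoid_mult} itself \<Rightarrow> bool" where
  "mult_lattice _ \<longleftrightarrow> (1::'a) = top \<and> (\<forall>(a::'a) B. a * Sup B = Sup ((\<lambda>b. a * b) ` B))"

definition compact_el :: "'a::complete_lattice \<Rightarrow> bool" where
  "compact_el c \<longleftrightarrow> (\<forall>A. c \<le> Sup A \<longrightarrow> (\<exists>F\<subseteq>A. finite F \<and> c \<le> Sup F))"

definition compacts :: "'a::complete_lattice set" where
  "compacts = {c. compact_el c}"

definition c_lattice :: "'a::{complete_lattice, comm_monoid_mult} itself \<Rightarrow> bool" where
  "c_lattice T \<longleftrightarrow> mult_lattice T
     \<and> (\<forall>a::'a. a = Sup {c. compact_el c \<and> c \<le> a})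
     \<and> compact_el (1::'a)
     \<and> (\<forall>a b::'a. compact_el a \<longrightarrow> compact_el b \<longrightarrow> compact_el (a * b))"

definition mult_closed :: "'a::{complete_lattice, comm_monoid_mult} set \<Rightarrow> bool" where
  "mult_closed S \<longleftrightarrow> S \<noteq> {} \<and> S \<subseteq> compacts \<and> (\<forall>a\<in>S. \<forall>b\<in>S. a * b \<in> S)"

definition colon :: "'a::{complete_lattice, comm_monoid_mult} \<Rightarrow> 'a \<Rightarrow> 'a" where
  "colon a b = Sup {y. y * b \<le> a}"

definition rad :: "'a::{complete_lattice, comm_monoid_mult} \<Rightarrow> 'a" where
  "rad a = Sup {y. compact_el y \<and> (\<exists>n::nat. n > 0 \<and> y ^ n \<le> a)}"

definition sat :: "'a::{complete_lattice, comm_monoid_mult} set \<Rightarrow> 'a \<Rightarrow> 'a" where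
  "sat S a = Sup {y. \<exists>s\<in>S. s * y \<le> a}"

definition S_prime :: "'a::{complete_lattice, comm_monoid_mult} set \<Rightarrow> 'a \<Rightarrow> bool" where
  "S_prime S p \<longleftrightarrow> p \<noteq> 1 \<and> (\<forall>t\<in>S. \<not> t \<le> p)
     \<and> (\<exists>s\<in>S. \<forall>a b. a * b \<le> p \<longrightarrow> s * a \<le> p \<or> s * b \<le> p)"

definition S_primary :: "'a::{complete_lattice, comm_monoid_mult} set \<Rightarrow> 'a \<Rightarrow> bool" where
  "S_primary S q \<longleftrightarrow> q \<noteq> 1 \<and> (\<forall>t\<in>S. \<not> t \<le> q)
     \<and> (\<exists>s\<in>S. \<forall>c d. c * d \<le> q \<longrightarrow> s * c \<le> q \<or> s * d \<le> rad q)"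

definition S_p_primary :: "'a::{complete_lattice, comm_monoid_mult} set \<Rightarrow> 'a \<Rightarrow> 'a \<Rightarrow> bool" where
  "S_p_primary S p q \<longleftrightarrow> S_primary S q \<and> p = rad q \<and> S_prime S p"

end

theory Submission
  imports Defs
begin

lemma ml_mono:
  fixes a b c :: "'a::{complete_lattice, comm_monoid_mult}"
  assumes "mult_lattice TYPE('a)" and "b \<le> c"
  shows "a * b \<le> a * c"
proof -
  have "a * Sup {b, c} = Sup ((\<lambda>x. a * x) ` {b, c})" using assms(1) unfolding mult_lattice_def by blast
  then have "a * Sup {b, c} = Sup {a * b, a * c}" by simp
  moreover have "Sup {b, c} = c" using assms(2) by (simp add: sup_absorb2)
  ultimately show ?thesis by (metis Sup_upper insertI1)
qed

lemma ml_mono_r: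
  fixes a b c :: "'a::{complete_lattice, comm_monoid_mult}"
  assumes "mult_lattice TYPE('a)" and "b \<le> c"
  shows "b * a \<le> c * a"
  using ml_mono[OF assms] by (simp add: mult.commute)

lemma ml_sup:
  fixes a :: "'a::{complete_lattice, comm_monoid_mult}"
  assumes "mult_lattice TYPE('a)"
  shows "a * Sup B = Sup ((\<lambda>b. a * b) ` B)"
  using assms unfolding mult_lattice_def by auto

lemma colon_le:
  fixes q b :: "'a::{complete_lattice, comm_monoid_mult}"
  assumes "mult_lattice TYPE('a)"
  shows "colon q b * b \<le> q"
proof -
  have "colon q b * b = b * colon q b" by (simp add: mult.commute)
  also have "\<dots> = Sup ((\<lambda>y. b * y) ` {y. y * b \<le> q})"
    unfolding colon_def using ml_sup[OF assms] by blast
  also have "\<dots> \<le> q" by (auto intro!: Sup_least simp: mult.commute)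
  finally show ?thesis .
qed

lemma colon_ge:
  fixes q b y :: "'a::{complete_lattice, comm_monoid_mult}"
  assumes "y * b \<le> q"
  shows "y \<le> colon q b"
  unfolding colon_def using assms by (auto intro: Sup_upper)

lemma rad_mono:
  fixes a b :: "'a::{complete_lattice, comm_monoid_mult}"
  assumes "a \<le> b"
  shows "rad a \<le> rad b"
  unfolding rad_def using assms by (auto intro!: Sup_subset_mono dest: order_trans)

lemma prime_pow:
  fixes S :: "'a::{complete_lattice, comm_monoid_mult} set"
  assumes mc: "mult_closed S"
    and nt: "\<forall>t\<in>S. \<not> t \<le> p"
    and s1S: "s1 \<in> S"
    and pr: "\<forall>a b. a * b \<le> p \<longrightarrow> s1 * a \<le> p \<or> s1 * b \<le> p"
  shows "n > 0 \<Longrightarrow> t \<in> S \<Longrightarrow> t * z ^ n \<le> p \<Longrightarrow> s1 * z \<le> p"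
proof (induction n arbitrary: t)
  case 0 then show ?case by simp
next
  case (Suc n)
  have cl: "\<And>a b. a \<in> S \<Longrightarrow> b \<in> S \<Longrightarrow> a * b \<in> S" using mc unfolding mult_closed_def by blast
  show ?case
  proof (cases "n = 0")
    case True
    then have "t * z \<le> p" using Suc by simp
    then have "s1 * t \<le> p \<or> s1 * z \<le> p" using pr by blast
    then show ?thesis using nt cl[OF s1S Suc(3)] by blast
  next
    case False
    have "(t * z ^ n) * z \<le> p" using Suc(4) by (simp add: mult_ac)
    then have "s1 * (t * z ^ n) \<le> p \<or> s1 * z \<le> p" using pr by blast
    then show ?thesis
    proof
      assume "s1 * (t * z ^ n) \<le> p"
      then have "(s1 * t) * z ^ n \<le> p" by (simp add: mult_ac)
      then show ?thesis using Suc.IH[of "s1 * t"] False cl[OF s1S Suc(3)] by blast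
    qed
  qed
qed

theorem mainTheorem13:
  fixes S :: "'a::{complete_lattice, comm_monoid_mult} set" and p q x :: 'a
  assumes "c_lattice TYPE('a)"
    and "mult_closed S" and "1 \<in> S" and "bot \<notin> S"
    and "S_p_primary S p q"
    and "\<forall>s\<in>S. \<not> s * x \<le> q"
  shows "(\<forall>s\<in>S. S_primary S (colon q (s * x)))
    \<and> (\<exists>t\<in>S. \<forall>s\<in>S. t * rad (colon q (s * x)) \<le> p \<and> p \<le> rad (colon q (s * x)))
    \<and> sat S (rad (colon q x)) = sat S p"
proof -
  have ml: "mult_lattice TYPE('a)" using assms(1) unfolding c_lattice_def by blast
  have top1: "(1::'a) = top" using ml unfolding mult_lattice_def by blast
  have cl: "\<And>a b. a \<in> S \<Longrightarrow> b \<in> S \<Longrightarrow> a * b \<in> S" using assms(2) unfolding mult_closed_def by blast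
  have prad: "p = rad q" using assms(5) unfolding S_p_primary_def by blast
  obtain s0 where s0S: "s0 \<in> S" and
    s0: "\<forall>c d. c * d \<le> q \<longrightarrow> s0 * c \<le> q \<or> s0 * d \<le> rad q"
    using assms(5) unfolding S_p_primary_def S_primary_def by blast
  have ntp: "\<forall>t\<in>S. \<not> t \<le> p" using assms(5) unfolding S_p_primary_def S_prime_def by blast
  obtain s1 where s1S: "s1 \<in> S" and
    s1: "\<forall>a b. a * b \<le> p \<longrightarrow> s1 * a \<le> p \<or> s1 * b \<le> p"
    using assms(5) unfolding S_p_primary_def S_prime_def by blast
  have qle: "q \<le> colon q b" for b
  proof -
    have "b \<le> 1" using top1 by (metis top_greatest)
    then have "q * b \<le> q * 1" using ml_mono[OF ml] by blast
    then show ?thesis using colon_ge by simp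
  qed
  have P1: "S_primary S (colon q (s * x))" if sS: "s \<in> S" for s
  proof -
    let ?a = "colon q (s * x)"
    have "?a \<noteq> 1"
    proof
      assume "?a = 1"
      then have "s * x \<le> q" using colon_le[OF ml, of q "s * x"] by simp
      then show False using assms(6) sS by blast
    qed
    moreover have "\<forall>t\<in>S. \<not> t \<le> ?a"
    proof (intro ballI notI)
      fix t assume tS: "t \<in> S" and "t \<le> ?a"
      then have "t * (s * x) \<le> ?a * (s * x)" using ml_mono_r[OF ml] by blast
      also have "\<dots> \<le> q" using colon_le[OF ml] .
      finally have "(t * s) * x \<le> q" by (simp add: mult_ac)
      then show False using assms(6) cl[OF tS sS] by blast
    qed
    moreover have "\<forall>c d. c * d \<le> ?a \<longrightarrow> s0 * c \<le> ?a \<or> s0 * d \<le> rad ?a"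
    proof (intro allI impI)
      fix c d assume "c * d \<le> ?a"
      then have "(c * d) * (s * x) \<le> ?a * (s * x)" using ml_mono_r[OF ml] by blast
      also have "\<dots> \<le> q" using colon_le[OF ml] .
      finally have "(c * (s * x)) * d \<le> q" by (simp add: mult_ac)
      then have "s0 * (c * (s * x)) \<le> q \<or> s0 * d \<le> rad q" using s0 by blast
      then show "s0 * c \<le> ?a \<or> s0 * d \<le> rad ?a"
      proof
        assume "s0 * (c * (s * x)) \<le> q"
        then have "(s0 * c) * (s * x) \<le> q" by (simp add: mult_ac)
        then show ?thesis using colon_ge by blast
      next
        assume "s0 * d \<le> rad q"
        then show ?thesis using rad_mono[OF qle] order_trans by blast
      qed
    qed
    ultimately show ?thesis unfolding S_primary_def using s0S by blast
  qed
  have P2: "s1 * rad (colon q (s * x)) \<le> p \<and> p \<le> rad (colon q (s * x))" if sS: "s \<in> S" for s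
  proof
    show "p \<le> rad (colon q (s * x))" using prad rad_mono[OF qle] by simp
    have "s1 * rad (colon q (s * x)) = Sup ((\<lambda>y. s1 * y) ` {y. compact_el y \<and> (\<exists>n::nat. n > 0 \<and> y ^ n \<le> colon q (s * x))})"
      unfolding rad_def using ml_sup[OF ml] by blast
    also have "\<dots> \<le> p"
    proof (rule Sup_least)
      fix w assume "w \<in> (\<lambda>y. s1 * y) ` {y. compact_el y \<and> (\<exists>n::nat. n > 0 \<and> y ^ n \<le> colon q (s * x))}"
      then obtain y n where w: "w = s1 * y" and n: "(n::nat) > 0" and yn: "y ^ n \<le> colon q (s * x)" by blast
      have "y ^ n * (s * x) \<le> colon q (s * x) * (s * x)" using yn ml_mono_r[OF ml] by blast
      also have "\<dots> \<le> q" using colon_le[OF ml] .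
      finally have "(s * x) * y ^ n \<le> q" by (simp add: mult_ac)
      then have "s0 * (s * x) \<le> q \<or> s0 * y ^ n \<le> rad q" using s0 by blast
      moreover have "\<not> s0 * (s * x) \<le> q" using assms(6) cl[OF s0S sS] by (metis mult.assoc)
      ultimately have "s0 * y ^ n \<le> p" using prad by simp
      then show "w \<le> p" using prime_pow[OF assms(2) ntp s1S s1 n s0S] w by blast
    qed
    finally show "s1 * rad (colon q (s * x)) \<le> p" .
  qed
  have P3: "sat S (rad (colon q x)) = sat S p"
  proof (rule antisym)
    have A: "s1 * rad (colon q x) \<le> p" "p \<le> rad (colon q x)" using P2[OF assms(3)] by simp_all
    show "sat S (rad (colon q x)) \<le> sat S p"
      unfolding sat_def
    proof (rule Sup_least)
      fix y assume "y \<in> {y. \<exists>s\<in>S. s * y \<le> rad (colon q x)}"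
      then obtain s where sS: "s \<in> S" and sy: "s * y \<le> rad (colon q x)" by blast
      have "s1 * (s * y) \<le> s1 * rad (colon q x)" using ml_mono[OF ml sy] .
      then have "(s1 * s) * y \<le> p" using A(1) by (simp add: mult_ac)
      then show "y \<le> Sup {y. \<exists>s\<in>S. s * y \<le> p}" using cl[OF s1S sS] by (auto intro: Sup_upper)
    qed
    show "sat S p \<le> sat S (rad (colon q x))"
      unfolding sat_def using A(2) by (auto intro!: Sup_subset_mono dest: order_trans)
  qed
  show ?thesis using P1 P2 P3 s1S by blast
qed

end
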